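(* For any $\theta=(B,\Omega)$ and $\psi_i=(m_i,s_i)$, the inverse of the Hessian of $J_i$ with respect to $\psi_i$ is $(\nabla_{\psi_i\psi_i}J_i)^{-1}(\theta,\psi_i)=-\begin{pmatrix}D_{\tilde a_i}^{-1/2}&\\&D_{\tilde a_i}^{-1/2}\end{pmatrix}\begin{pmatrix}C_i&-C_iD_{s_i}\Lambda_i\\-\Lambda_iD_{s_i}C_i&\Lambda_i+\Lambda_iD_{s_i}C_iD_{s_i}\Lambda_i\end{pmatrix}\begin{pmatrix}D_{\tilde a_i}^{-1/2}&\\&D_{\tilde a_i}^{-1/2}\end{pmatrix}$, where $\Lambda_i=\big(I_p+D_{s_i}^2(D_{\tilde a_i}+D_{\tilde a_i}D_{s_i}^2+\Omega_D)\big)^{-1}D_{\tilde a_i}D_{s_i}^2$ and $C_i=\big(I_p+D_{\tilde a_i}^{-1/2}\Omega D_{\tilde a_i}^{-1/2}-D_{s_i}\Lambda_iD_{s_i}\big)^{-1}$.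
   Context: PLN model, observation $i$ with counts $Y_i\in\mathbb N^p$, covariate $x_i\in\mathbb R^m$, offset $o_i\in\mathbb R^p$; $B\in\mathcal M_{m,p}(\mathbb R)$ (columns $B_j$), $\Omega$ symmetric positive definite. Variational parameter $\psi_i=(m_i,s_i)\in\mathbb R^p\times(0,\infty)^p$ (ordered as $(m_i,s_i)$ in the Hessian). Single-observation ELBO: $J_i(\theta,\psi_i)=Y_i^\top(o_i+m_i+B^\top x_i)-\tilde a_i^\top1_p-\sum_j\log(Y_{ij}!)+\frac12\log|\Omega|-\frac12m_i^\top\Omega m_i-\frac12\mathrm{diag}(\Omega)^\top s_i^2+\sum_j\log s_{ij}+\frac p2$, $\tilde a_{ij}=\exp(o_{ij}+x_i^\top B_j+m_{ij}+s_{ij}^2/2)$. Notation: $D_v=\mathrm{Diag}(v)$, $\Omega_D=I_p\odot\Omega$ (diagonal part of $\Omega$). *)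

theory Defs
  imports "HOL-Analysis.Analysis"
begin

definition sym_pos_def :: "real^'p^'p \<Rightarrow> bool" where
  "sym_pos_def A \<longleftrightarrow> transpose A = A \<and> (\<forall>v. v \<noteq> 0 \<longrightarrow> v \<bullet> (A *v v) > 0)"

definition Dg :: "real^'p \<Rightarrow> real^'p^'p" where
  "Dg v = (\<chi> i j. if i = j then v $ i else 0)"

definition diagpart :: "real^'p^'p \<Rightarrow> real^'p^'p" where
  "diagpart A = (\<chi> i j. if i = j then A $ i $ j else 0)"

text \<open>The variational parameter psi = (m, s) as one vector indexed by 'p + 'p,
  the m-block on Inl indices, the s-block on Inr indices.\<close>
definition psi :: "real^'p \<Rightarrow> real^'p \<Rightarrow> real^('p + 'p)" where
  "psi m s = (\<chi> k. case k of Inl j \<Rightarrow> m $ j | Inr j \<Rightarrow> s $ j)"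

definition mpart :: "real^('p + 'p) \<Rightarrow> real^'p" where
  "mpart v = (\<chi> j. v $ Inl j)"

definition spart :: "real^('p + 'p) \<Rightarrow> real^'p" where
  "spart v = (\<chi> j. v $ Inr j)"

definition block :: "real^'p^'p \<Rightarrow> real^'p^'p \<Rightarrow> real^'p^'p \<Rightarrow> real^'p^'p \<Rightarrow> real^('p+'p)^('p+'p)" where
  "block A B C D = (\<chi> k l. case k of
      Inl i \<Rightarrow> (case l of Inl j \<Rightarrow> A $ i $ j | Inr j \<Rightarrow> B $ i $ j)
    | Inr i \<Rightarrow> (case l of Inl j \<Rightarrow> C $ i $ j | Inr j \<Rightarrow> D $ i $ j))"

text \<open>a tilde: exp(o_j + x^T B_j + m_j + s_j^2/2).  B is m x p (B $ k $ j, row k, column j).\<close>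
definition atilde :: "real^'m \<Rightarrow> real^'p \<Rightarrow> real^'p^'m \<Rightarrow> real^'p \<Rightarrow> real^'p \<Rightarrow> real^'p" where
  "atilde x off B m s = (\<chi> j. exp (off $ j + (transpose B *v x) $ j + m $ j + (s $ j)^2 / 2))"

definition J_elbo :: "nat^'p \<Rightarrow> real^'m \<Rightarrow> real^'p \<Rightarrow> real^'p^'m \<Rightarrow> real^'p^'p \<Rightarrow> real^('p+'p) \<Rightarrow> real" where
  "J_elbo Y x off B \<Omega> v =
    (let m = mpart v; s = spart v; Yr = (\<chi> j. real (Y $ j)) in
      Yr \<bullet> (off + m + transpose B *v x)
      - (\<Sum>j\<in>UNIV. atilde x off B m s $ j)
      - (\<Sum>j\<in>UNIV. ln (fact (Y $ j)))
      + ln (det \<Omega>) / 2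
      - (m \<bullet> (\<Omega> *v m)) / 2
      - (\<Sum>j\<in>UNIV. \<Omega> $ j $ j * (s $ j)^2) / 2
      + (\<Sum>j\<in>UNIV. ln (s $ j))
      + real CARD('p) / 2)"

definition partial_deriv :: "(real^'n \<Rightarrow> real) \<Rightarrow> 'n \<Rightarrow> real^'n \<Rightarrow> real" where
  "partial_deriv f k v = deriv (\<lambda>t. f (v + t *\<^sub>R axis k 1)) 0"

definition hessian :: "(real^'n \<Rightarrow> real) \<Rightarrow> real^'n \<Rightarrow> real^'n^'n" where
  "hessian f v = (\<chi> k l. partial_deriv (partial_deriv f l) k v)"

end

theory Submission
  imports Defs
begin

lemma partial_deriv_from_has_derivative:
  fixes f :: "real^'n \<Rightarrow> real"
  assumes "(f has_derivative f') (at v)"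
  shows "partial_deriv f k v = f' (axis k 1)"
proof -
  have lin: "linear f'" using assms has_derivative_linear by blast
  have "((\<lambda>t. v + t *\<^sub>R axis k 1) has_derivative (\<lambda>t. t *\<^sub>R axis k 1)) (at 0)"
    by (auto intro!: derivative_eq_intros)
  then have "((\<lambda>t. f (v + t *\<^sub>R axis k 1)) has_derivative (\<lambda>t. f' (t *\<^sub>R axis k 1))) (at 0)"
    using has_derivative_compose[of "\<lambda>t. v + t *\<^sub>R axis k 1" _ 0 UNIV f f'] assms
    by (simp add: o_def)
  then have "((\<lambda>t. f (v + t *\<^sub>R axis k 1)) has_derivative (\<lambda>t. t * f' (axis k 1))) (at 0)"
    using linear_scale[OF lin] by (simp add: mult.commute)
  moreover have "(\<lambda>t. t * f' (axis k 1)) = (*) (f' (axis k 1))" by (rule ext) simp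
  ultimately have "((\<lambda>t. f (v + t *\<^sub>R axis k 1)) has_real_derivative f' (axis k 1)) (at 0)"
    by (simp add: has_field_derivative_def)
  then show ?thesis unfolding partial_deriv_def by (rule DERIV_imp_deriv)
qed

lemma mpart_linear: "bounded_linear mpart"
  by (rule linear_conv_bounded_linear[THEN iffD1]) (auto intro!: linearI simp: mpart_def vec_eq_iff)
lemma spart_linear: "bounded_linear spart"
  by (rule linear_conv_bounded_linear[THEN iffD1]) (auto intro!: linearI simp: spart_def vec_eq_iff)

definition U :: "(real^('p::finite+'p)) set" where "U = {w. \<forall>j. w $ Inr j > 0}"

lemma has_derivative_nth[derivative_intros]:
  "((\<lambda>w. w $ i) has_derivative (\<lambda>h. h $ i)) F"
  by (rule bounded_linear_imp_has_derivative[OF bounded_linear_vec_nth])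

definition cc :: "real^'m \<Rightarrow> real^'p \<Rightarrow> real^'p^'m \<Rightarrow> 'p \<Rightarrow> real" where
  "cc x off B j = off $ j + (transpose B *v x) $ j"

definition K0 :: "nat^'p \<Rightarrow> real^'m \<Rightarrow> real^'p \<Rightarrow> real^'p^'m \<Rightarrow> real^'p^'p \<Rightarrow> real" where
  "K0 Y x off B \<Omega> = (\<Sum>j\<in>UNIV. real (Y $ j) * cc x off B j) - (\<Sum>j\<in>UNIV. ln (fact (Y $ j)))
      + ln (det \<Omega>) / 2 + real CARD('p) / 2"

lemma J_coord:
  "J_elbo Y x off B \<Omega> w = K0 Y x off B \<Omega> + (\<Sum>j\<in>UNIV. real (Y $ j) * w $ Inl j)
     - (\<Sum>j\<in>UNIV. exp (cc x off B j + w $ Inl j + (w $ Inr j)^2 / 2))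
     - (\<Sum>i\<in>UNIV. \<Sum>k\<in>UNIV. w $ Inl i * \<Omega> $ i $ k * w $ Inl k) / 2
     - (\<Sum>j\<in>UNIV. \<Omega> $ j $ j * (w $ Inr j)^2) / 2
     + (\<Sum>j\<in>UNIV. ln (w $ Inr j))"
proof -
  have 1: "(\<chi> j. real (Y $ j)) \<bullet> (off + mpart w + transpose B *v x)
     = (\<Sum>j\<in>UNIV. real (Y $ j) * cc x off B j) + (\<Sum>j\<in>UNIV. real (Y $ j) * w $ Inl j)"
    by (simp add: inner_vec_def cc_def mpart_def sum.distrib[symmetric] algebra_simps)
  have 2: "mpart w \<bullet> (\<Omega> *v mpart w) = (\<Sum>i\<in>UNIV. \<Sum>k\<in>UNIV. w $ Inl i * \<Omega> $ i $ k * w $ Inl k)"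
    by (simp add: inner_vec_def mpart_def matrix_vector_mult_def sum_distrib_left mult.assoc)
  show ?thesis
    unfolding J_elbo_def Let_def 1 2
    by (simp add: K0_def atilde_def cc_def mpart_def spart_def add.assoc)
qed

definition DJ where
  "DJ Y x off B \<Omega> w h = (\<Sum>j\<in>UNIV. real (Y $ j) * h $ Inl j)
     - (\<Sum>j\<in>UNIV. (h $ Inl j + h $ Inr j * w $ Inr j) * exp (cc x off B j + w $ Inl j + (w $ Inr j)^2 / 2))
     - (\<Sum>i\<in>UNIV. \<Sum>k\<in>UNIV. w $ Inl i * \<Omega> $ i $ k * h $ Inl k + h $ Inl i * \<Omega> $ i $ k * w $ Inl k) / 2
     - (\<Sum>j\<in>UNIV. \<Omega> $ j $ j * (2 * h $ Inr j * w $ Inr j)) / 2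
     + (\<Sum>j\<in>UNIV. h $ Inr j * inverse (w $ Inr j))"

lemma J_deriv:
  fixes w :: "real^('p::finite+'p)"
  assumes "\<forall>j. w $ Inr j > 0"
  shows "(J_elbo Y x off B \<Omega> has_derivative DJ Y x off B \<Omega> w) (at w)"
  unfolding J_coord[abs_def]
  apply (rule derivative_eq_intros refl | simp add: assms)+
  apply (simp add: DJ_def fun_eq_iff)
  done
definition gr where
  "gr Y x off B \<Omega> l w = (case l of
     Inl j \<Rightarrow> real (Y $ j) - exp (cc x off B j + w $ Inl j + (w $ Inr j)^2 / 2) - (\<Sum>k\<in>UNIV. \<Omega> $ j $ k * w $ Inl k)
   | Inr j \<Rightarrow> - (w $ Inr j * exp (cc x off B j + w $ Inl j + (w $ Inr j)^2 / 2)) - \<Omega> $ j $ j * w $ Inr j + inverse (w $ Inr j))"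

lemma axis_Inl_Inl: "axis (Inl j) 1 $ Inl i = (if i = j then 1 else (0::real))"
  by (simp add: axis_def)
lemma axis_Inl_Inr: "axis (Inl j) 1 $ Inr i = (0::real)"
  by (simp add: axis_def)
lemma axis_Inr_Inl: "axis (Inr j) 1 $ Inl i = (0::real)"
  by (simp add: axis_def)
lemma axis_Inr_Inr: "axis (Inr j) 1 $ Inr i = (if i = j then 1 else (0::real))"
  by (simp add: axis_def)

abbreviation (input) AA where "AA x off B j v \<equiv> exp (cc x off B j + v $ Inl j + (v $ Inr j)^2 / 2)"

lemma gr_Inl_deriv:
  fixes v :: "real^('p::finite+'p)"
  shows "((\<lambda>w. gr Y x off B \<Omega> (Inl j) w) has_derivative
     (\<lambda>h. - ((h $ Inl j + h $ Inr j * v $ Inr j) * AA x off B j v) - (\<Sum>k\<in>UNIV. \<Omega> $ j $ k * h $ Inl k))) (at v)"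
  unfolding gr_def sum.case
  apply (rule derivative_eq_intros refl | simp)+
  done

lemma gr_Inr_deriv:
  fixes v :: "real^('p::finite+'p)"
  assumes "v $ Inr j > 0"
  shows "((\<lambda>w. gr Y x off B \<Omega> (Inr j) w) has_derivative
     (\<lambda>h. - (v $ Inr j * ((h $ Inl j + h $ Inr j * v $ Inr j) * AA x off B j v) + h $ Inr j * AA x off B j v)
         - \<Omega> $ j $ j * h $ Inr j - h $ Inr j / (v $ Inr j)^2)) (at v)"
proof -
  have nz: "v $ Inr j \<noteq> 0" using assms by simp
  show ?thesis
  unfolding gr_def sum.case
  apply (rule derivative_eq_intros refl | simp add: nz)+
  apply (simp add: fun_eq_iff field_simps power2_eq_square)
  done
qed
lemma if01_simps:
  "(if b then c else 0) * (e::real) = (if b then c * e else 0)"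
  "(e::real) * (if b then c else 0) = (if b then e * c else 0)"
  by auto

lemma DJ_axis:
  assumes sym: "transpose \<Omega> = \<Omega>"
  shows "DJ Y x off B \<Omega> w (axis l 1) = gr Y x off B \<Omega> l w"
proof (cases l)
  case (Inl j)
  have s: "\<Omega> $ i $ j = \<Omega> $ j $ i" for i j using sym
    by (metis transpose_def vec_lambda_beta)
  have d1: "(\<Sum>k\<in>UNIV. f k * (if k = j then 1 else 0)) = f j" for f :: "'a \<Rightarrow> real"
  proof -
    have "(\<Sum>k\<in>UNIV. f k * (if k = j then 1 else 0)) = (\<Sum>k\<in>UNIV. if k = j then f k else 0)"
      by (rule sum.cong) auto
    then show ?thesis by simp
  qed
  have d2: "(\<Sum>k\<in>UNIV. (if k = j then 1 else 0) * f k) = f j" for f :: "'a \<Rightarrow> real"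
    using d1[of f] by (simp add: mult.commute)
  have e1: "(\<Sum>i\<in>UNIV. \<Sum>k\<in>UNIV. w $ Inl i * \<Omega> $ i $ k * (if k = j then 1 else 0)
           + (if i = j then 1 else 0) * \<Omega> $ i $ k * w $ Inl k)
        = (\<Sum>i\<in>UNIV. w $ Inl i * \<Omega> $ i $ j) + (\<Sum>k\<in>UNIV. \<Omega> $ j $ k * w $ Inl k)"
  proof -
    have "(\<Sum>i\<in>UNIV. \<Sum>k\<in>UNIV. w $ Inl i * \<Omega> $ i $ k * (if k = j then 1 else 0)
           + (if i = j then 1 else 0) * \<Omega> $ i $ k * w $ Inl k)
       = (\<Sum>i\<in>UNIV. (\<Sum>k\<in>UNIV. w $ Inl i * \<Omega> $ i $ k * (if k = j then 1 else 0))
           + (if i = j then 1 else 0) * (\<Sum>k\<in>UNIV. \<Omega> $ i $ k * w $ Inl k))"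
      by (simp add: sum.distrib sum_distrib_left mult.assoc)
    also have "\<dots> = (\<Sum>i\<in>UNIV. w $ Inl i * \<Omega> $ i $ j) + (\<Sum>k\<in>UNIV. \<Omega> $ j $ k * w $ Inl k)"
      by (simp only: d1 d2 sum.distrib)
    finally show ?thesis .
  qed
  have e2: "(\<Sum>i\<in>UNIV. w $ Inl i * \<Omega> $ i $ j) = (\<Sum>k\<in>UNIV. \<Omega> $ j $ k * w $ Inl k)"
    by (rule sum.cong) (auto simp: s[of _ j])
  show ?thesis using Inl
    by (simp add: DJ_def gr_def axis_Inl_Inl axis_Inl_Inr d1 d2 e1 e2)
next
  case (Inr j)
  then show ?thesis
    by (simp add: DJ_def gr_def axis_Inr_Inl axis_Inr_Inr if01_simps)
qed
lemma open_U: "open {w::real^('p::finite+'p). \<forall>j. w $ Inr j > 0}"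
proof -
  have "{w::real^('p+'p). \<forall>j. w $ Inr j > 0} = (\<Inter>j\<in>UNIV. {w. w $ Inr j > 0})" by auto
  then show ?thesis by (auto intro!: open_INT open_halfspace_component_gt_cart)
qed

lemma pd1:
  fixes w :: "real^('p::finite+'p)"
  assumes sym: "transpose \<Omega> = \<Omega>" and "\<forall>j. w $ Inr j > 0"
  shows "partial_deriv (J_elbo Y x off B \<Omega>) l w = gr Y x off B \<Omega> l w"
  using partial_deriv_from_has_derivative[OF J_deriv[OF assms(2)], of Y x off B \<Omega> l] DJ_axis[OF sym, of Y x off B w l] by simp

lemma pd2:
  fixes v :: "real^('p::finite+'p)"
  assumes sym: "transpose \<Omega> = \<Omega>" and pos: "\<forall>j. v $ Inr j > 0"
    and der: "(gr Y x off B \<Omega> l has_derivative D) (at v)"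
  shows "hessian (J_elbo Y x off B \<Omega>) v $ k $ l = D (axis k 1)"
proof -
  have "(partial_deriv (J_elbo Y x off B \<Omega>) l has_derivative D) (at v)"
    apply (rule has_derivative_transform_within_open[OF der open_U])
    using pos apply simp
    apply (simp add: pd1[OF sym])
    done
  then show ?thesis unfolding hessian_def
    by (simp add: partial_deriv_from_has_derivative)
qed

lemma hess_entries:
  fixes v :: "real^('p::finite+'p)"
  assumes sym: "transpose \<Omega> = \<Omega>" and pos: "\<forall>j. v $ Inr j > 0"
  shows "hessian (J_elbo Y x off B \<Omega>) v $ Inl i $ Inl j = - (if i = j then AA x off B j v else 0) - \<Omega> $ i $ j"
    and "hessian (J_elbo Y x off B \<Omega>) v $ Inr i $ Inl j = - (if i = j then AA x off B j v * v $ Inr j else 0)"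
    and "hessian (J_elbo Y x off B \<Omega>) v $ Inl i $ Inr j = - (if i = j then AA x off B j v * v $ Inr j else 0)"
    and "hessian (J_elbo Y x off B \<Omega>) v $ Inr i $ Inr j = - (if i = j then AA x off B j v * (v $ Inr j)^2
           + AA x off B j v + \<Omega> $ j $ j + 1 / (v $ Inr j)^2 else 0)"
proof -
  have s: "\<Omega> $ j $ i = \<Omega> $ i $ j" using sym by (metis transpose_def vec_lambda_beta)
  have d1: "(\<Sum>k\<in>UNIV. f k * (if k = i then 1 else 0)) = f i" for f :: "'p \<Rightarrow> real"
  proof -
    have "(\<Sum>k\<in>UNIV. f k * (if k = i then 1 else 0)) = (\<Sum>k\<in>UNIV. if k = i then f k else 0)"
      by (rule sum.cong) auto
    then show ?thesis by simp
  qed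
  show "hessian (J_elbo Y x off B \<Omega>) v $ Inl i $ Inl j = - (if i = j then AA x off B j v else 0) - \<Omega> $ i $ j"
    using pd2[where k="Inl i", OF sym pos gr_Inl_deriv[where j=j and Y=Y and x=x and off=off and B=B and \<Omega>=\<Omega>]] by (simp add: axis_Inl_Inl axis_Inl_Inr d1 s)
  show "hessian (J_elbo Y x off B \<Omega>) v $ Inr i $ Inl j = - (if i = j then AA x off B j v * v $ Inr j else 0)"
    using pd2[where k="Inr i", OF sym pos gr_Inl_deriv[where j=j and Y=Y and x=x and off=off and B=B and \<Omega>=\<Omega>]] by (simp add: axis_Inr_Inl axis_Inr_Inr)
  show "hessian (J_elbo Y x off B \<Omega>) v $ Inl i $ Inr j = - (if i = j then AA x off B j v * v $ Inr j else 0)"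
    using pd2[where k="Inl i", OF sym pos gr_Inr_deriv[where j=j and Y=Y and x=x and off=off and B=B and \<Omega>=\<Omega>]] pos by (simp add: axis_Inl_Inl axis_Inl_Inr)
  show "hessian (J_elbo Y x off B \<Omega>) v $ Inr i $ Inr j = - (if i = j then AA x off B j v * (v $ Inr j)^2
           + AA x off B j v + \<Omega> $ j $ j + 1 / (v $ Inr j)^2 else 0)"
    using pd2[where k="Inr i", OF sym pos gr_Inr_deriv[where j=j and Y=Y and x=x and off=off and B=B and \<Omega>=\<Omega>]] pos
    by (cases "i = j") (simp_all add: axis_Inr_Inl axis_Inr_Inr power2_eq_square algebra_simps)
qed
lemma sum_UNIV_Plus:
  "sum f (UNIV::('a::finite+'b::finite) set) = sum (\<lambda>i. f (Inl i)) UNIV + sum (\<lambda>i. f (Inr i)) UNIV"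
  using sum.Plus[of "UNIV::'a set" "UNIV::'b set" f] by (simp add: o_def)

lemma block_mult:
  fixes A B C D E F G H :: "real^'p::finite^'p"
  shows "block A B C D ** block E F G H
    = block (A ** E + B ** G) (A ** F + B ** H) (C ** E + D ** G) (C ** F + D ** H)"
  unfolding vec_eq_iff
proof (intro allI)
  fix k l :: "'p + 'p"
  show "(block A B C D ** block E F G H) $ k $ l =
    block (A ** E + B ** G) (A ** F + B ** H) (C ** E + D ** G) (C ** F + D ** H) $ k $ l"
    by (cases k; cases l) (simp_all add: block_def matrix_matrix_mult_def sum_UNIV_Plus)
qed

lemma block_mat1: "block (mat 1) 0 0 (mat 1) = (mat 1 :: real^('p::finite+'p)^('p+'p))"
  unfolding vec_eq_iff
proof (intro allI)
  fix k l :: "'p + 'p"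
  show "block (mat 1) 0 0 (mat 1) $ k $ l = (mat 1 :: real^('p::finite+'p)^('p+'p)) $ k $ l"
    by (cases k; cases l) (simp_all add: block_def mat_def)
qed

lemma block_neg:
  fixes A B C D :: "real^'p::finite^'p"
  shows "- block A B C D = block (-A) (-B) (-C) (-D)"
  unfolding vec_eq_iff
proof (intro allI)
  fix k l :: "'p + 'p"
  show "(- block A B C D) $ k $ l = block (-A) (-B) (-C) (-D) $ k $ l"
    by (cases k; cases l) (simp_all add: block_def)
qed

lemma mm_simps:
  fixes A B C :: "real^'n::finite^'n"
  shows "(A + B) ** C = A ** C + B ** C"
    and "A ** (B - C) = A ** B - A ** C"
    and "(A - B) ** C = A ** C - B ** C"
    and "A ** (- B) = - (A ** B)"
    and "(- A) ** B = - (A ** B)"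
  by (simp_all add: matrix_matrix_mult_def vec_eq_iff sum.distrib sum_subtractf sum_negf algebra_simps)

lemma matrix_inv_eq:
  fixes A B :: "real^'n::finite^'n"
  assumes "A ** B = mat 1"
  shows "matrix_inv A = B"
proof -
  have BA: "B ** A = mat 1" using assms matrix_left_right_inverse by blast
  have "A ** matrix_inv A = mat 1 \<and> matrix_inv A ** A = mat 1"
    unfolding matrix_inv_def by (rule someI[of _ B]) (use assms BA in simp)
  then have "matrix_inv A = matrix_inv A ** (A ** B)" using assms by simp
  also have "\<dots> = B" using \<open>_ \<and> _\<close> by (simp add: matrix_mul_assoc)
  finally show ?thesis .
qed

lemma block_inverse:
  fixes Am Ds L C Fm :: "real^'p::finite^'p"
  assumes S: "(Am - Ds ** L ** Ds) ** C = mat 1" and F: "Fm ** L = mat 1"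
  shows "block Am Ds Ds Fm ** block C (- (C ** Ds ** L)) (- (L ** Ds ** C)) (L + L ** Ds ** C ** Ds ** L) = mat 1"
proof -
  have S': "Am ** C = mat 1 + Ds ** L ** Ds ** C" using S by (simp add: mm_simps algebra_simps)
  have F': "Fm ** L ** X = X" for X using F by simp
  have 1: "Am ** C + Ds ** (- (L ** Ds ** C)) = mat 1"
    using S' by (simp add: mm_simps matrix_mul_assoc)
  have 2: "Am ** (- (C ** Ds ** L)) + Ds ** (L + L ** Ds ** C ** Ds ** L) = 0"
    using S' by (simp add: mm_simps matrix_add_ldistrib matrix_mul_assoc)
  have 3: "Ds ** C + Fm ** (- (L ** Ds ** C)) = 0"
    by (simp add: mm_simps matrix_mul_assoc F')
  have 4: "Ds ** (- (C ** Ds ** L)) + Fm ** (L + L ** Ds ** C ** Ds ** L) = mat 1"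
    by (simp add: mm_simps matrix_add_ldistrib matrix_mul_assoc F' F)
  show ?thesis by (simp add: block_mult 1 2 3 4 block_mat1)
qed
lemma Dg_entry: "Dg u $ i $ j = (if i = j then u $ i else 0)"
  by (simp add: Dg_def)

lemma Dg_left: "(Dg u ** (A::real^'n::finite^'n)) $ i $ j = u $ i * A $ i $ j"
proof -
  have "(Dg u ** A) $ i $ j = (\<Sum>k\<in>UNIV. if k = i then u $ i * A $ i $ j else 0)"
    by (simp add: matrix_matrix_mult_def Dg_def if01_simps)
  then show ?thesis by simp
qed

lemma Dg_right: "((A::real^'n::finite^'n) ** Dg u) $ i $ j = A $ i $ j * u $ j"
proof -
  have "(A ** Dg u) $ i $ j = (\<Sum>k\<in>UNIV. if k = j then A $ i $ j * u $ j else 0)"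
    by (simp add: matrix_matrix_mult_def Dg_def if01_simps)
  then show ?thesis by simp
qed

lemma Dg_Dg: "Dg u ** Dg w = Dg (\<chi> i. u $ i * (w $ i :: real))"
  by (simp add: vec_eq_iff Dg_left Dg_entry)

lemma Dg_add: "Dg u + Dg w = Dg (u + (w :: real^'n))"
  by (simp add: vec_eq_iff Dg_entry)

lemma mat1_Dg: "mat 1 = Dg (\<chi> i. (1::real))"
  by (simp add: vec_eq_iff Dg_entry mat_def)

lemma Dg_eq_iff: "Dg u = Dg w \<longleftrightarrow> u = (w :: real^'n)"
  by (auto simp: vec_eq_iff Dg_entry dest: spec2)

lemma diagpart_Dg: "diagpart A = Dg (\<chi> j. A $ j $ j)"
  by (simp add: vec_eq_iff Dg_entry diagpart_def)

lemma Dg_mulv: "Dg u *v y = (\<chi> i. u $ i * (y $ i :: real))"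
proof -
  have "(Dg u *v y) $ i = (\<Sum>k\<in>UNIV. if k = i then u $ i * y $ i else 0)" for i
    by (simp add: matrix_vector_mult_def Dg_def if01_simps)
  then show ?thesis by (simp add: vec_eq_iff)
qed

lemma ker_trivial:
  fixes \<Omega> :: "real^'p::finite^'p" and d c y :: "real^'p"
  assumes pd: "sym_pos_def \<Omega>" and c: "\<forall>i. c $ i < 1"
    and eq: "(mat 1 + Dg d ** \<Omega> ** Dg d - Dg c) *v y = 0"
  shows "y = 0"
proof (rule ccontr)
  assume ny: "y \<noteq> 0"
  define z where "z = Dg d *v y"
  have "(mat 1 + Dg d ** \<Omega> ** Dg d - Dg c) *v y = y + Dg d *v (\<Omega> *v z) - Dg c *v y"
    by (simp add: z_def matrix_vector_mult_add_rdistrib matrix_vector_mult_diff_rdistrib matrix_vector_mul_assoc matrix_mul_assoc)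
  then have "0 = y \<bullet> (y + Dg d *v (\<Omega> *v z) - Dg c *v y)" using eq by simp
  also have "\<dots> = (\<Sum>i\<in>UNIV. (1 - c $ i) * (y $ i)^2) + z \<bullet> (\<Omega> *v z)"
    by (simp add: inner_add_right inner_diff_right Dg_mulv z_def inner_vec_def
        sum.distrib[symmetric] sum_subtractf[symmetric] power2_eq_square algebra_simps)
  finally have 0: "0 = (\<Sum>i\<in>UNIV. (1 - c $ i) * (y $ i)^2) + z \<bullet> (\<Omega> *v z)" .
  obtain i where "y $ i \<noteq> 0" using ny by (auto simp: vec_eq_iff)
  then have "0 < (\<Sum>i\<in>UNIV. (1 - c $ i) * (y $ i)^2)"
    using c by (intro sum_pos2[where i=i]) (auto intro!: mult_pos_pos mult_nonneg_nonneg simp: less_imp_le)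
  moreover have "0 \<le> z \<bullet> (\<Omega> *v z)"
    using pd unfolding sym_pos_def_def by (cases "z = 0") (auto simp: less_imp_le)
  ultimately show False using 0 by linarith
qed
lemma main:
  fixes Y :: "nat^'p::finite" and x :: "real^'m::finite" and off :: "real^'p"
    and B :: "real^'p^'m" and \<Omega> :: "real^'p^'p" and m s :: "real^'p"
  assumes pd: "sym_pos_def \<Omega>" and spos: "\<forall>j. s $ j > 0"
    and a_def: "a = atilde x off B m s" and Ds_def: "Ds = Dg s"
    and Dh_def: "Dh = Dg (\<chi> j. 1 / sqrt (a $ j))"
    and L_def: "\<Lambda> = matrix_inv (mat 1 + Ds ** Ds ** (Dg a + Dg a ** Ds ** Ds + diagpart \<Omega>)) ** Dg a ** Ds ** Ds"
    and C_def: "C = matrix_inv (mat 1 + Dh ** \<Omega> ** Dh - Ds ** \<Lambda> ** Ds)"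
  shows "matrix_inv (hessian (J_elbo Y x off B \<Omega>) (psi m s))
            = - (block Dh 0 0 Dh ** block C (- (C ** Ds ** \<Lambda>)) (- (\<Lambda> ** Ds ** C))
                    (\<Lambda> + \<Lambda> ** Ds ** C ** Ds ** \<Lambda>) ** block Dh 0 0 Dh)"
proof -
  have sym: "transpose \<Omega> = \<Omega>" using pd sym_pos_def_def by blast
  have apos: "a $ j > 0" for j by (simp add: a_def atilde_def)
  have anz: "a $ j \<noteq> 0" for j using apos[of j] by simp
  have snz: "s $ j \<noteq> 0" for j using spos by (metis less_irrefl)
  have om: "\<Omega> $ j $ j > 0" for j
  proof -
    have "axis j (1::real) \<noteq> 0" by (simp add: axis_eq_0_iff)
    then have "0 < axis j 1 \<bullet> (\<Omega> *v axis j 1)" using pd sym_pos_def_def by blast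
    also have "axis j 1 \<bullet> (\<Omega> *v axis j 1) = \<Omega> $ j $ j"
      by (simp add: inner_vec_def matrix_vector_mult_def axis_def if01_simps)
    finally show ?thesis .
  qed
  define v where "v = psi m s"
  have vInl: "v $ Inl j = m $ j" and vInr: "v $ Inr j = s $ j" for j by (simp_all add: v_def psi_def)
  have vpos: "\<forall>j. v $ Inr j > 0" using spos vInr by simp
  have AAa: "exp (cc x off B j + v $ Inl j + (s $ j)^2 / 2) = a $ j" for j by (simp add: a_def atilde_def cc_def vInl vInr)
  define e where "e = (\<chi> j. a $ j * (s $ j)^2 + a $ j + \<Omega> $ j $ j + 1 / (s $ j)^2)"
  define as where "as = (\<chi> j. a $ j * s $ j)"
  have H: "hessian (J_elbo Y x off B \<Omega>) v = block (- (Dg a + \<Omega>)) (- Dg as) (- Dg as) (- Dg e)"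
    unfolding vec_eq_iff
  proof (intro allI)
    fix k l :: "'p + 'p"
    show "hessian (J_elbo Y x off B \<Omega>) v $ k $ l = block (- (Dg a + \<Omega>)) (- Dg as) (- Dg as) (- Dg e) $ k $ l"
      by (cases k; cases l) (auto simp: hess_entries[OF sym vpos] block_def Dg_entry AAa vInr e_def as_def mult.commute)
  qed
  define Dq where "Dq = Dg (\<chi> j. sqrt (a $ j))"
  have DqDh: "Dq ** Dh = mat 1" and DhDq: "Dh ** Dq = mat 1"
    by (simp_all add: Dq_def Dh_def Dg_Dg mat1_Dg anz)
  have DhDq': "X ** Dh ** Dq = X" for X by (simp add: DhDq flip: matrix_mul_assoc)
  define p where "p = (\<chi> j. 1 + (s $ j)^2 * (a $ j + a $ j * (s $ j)^2 + \<Omega> $ j $ j))"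
  have ppos: "p $ j > 0" for j
    unfolding p_def using apos[of j] om[of j] by (simp add: add_pos_nonneg)
  have pnz: "p $ j \<noteq> 0" for j using ppos[of j] by simp
  have P: "mat 1 + Ds ** Ds ** (Dg a + Dg a ** Ds ** Ds + diagpart \<Omega>) = Dg p"
    by (simp add: Ds_def Dg_Dg Dg_add diagpart_Dg mat1_Dg Dg_eq_iff vec_eq_iff Dg_entry p_def power2_eq_square algebra_simps)
  have Pinv: "matrix_inv (Dg p) = Dg (\<chi> j. 1 / p $ j)"
    by (rule matrix_inv_eq) (simp add: Dg_Dg mat1_Dg Dg_eq_iff vec_eq_iff Dg_entry pnz)
  define lam where "lam = (\<chi> j. a $ j * (s $ j)^2 / p $ j)"
  have L: "\<Lambda> = Dg lam"
    unfolding L_def P Pinv by (simp add: Ds_def Dg_Dg Dg_eq_iff vec_eq_iff Dg_entry lam_def power2_eq_square)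
  define f where "f = (\<chi> j. p $ j / (a $ j * (s $ j)^2))"
  have FL: "Dg f ** \<Lambda> = mat 1"
    by (simp add: L Dg_Dg mat1_Dg Dg_eq_iff vec_eq_iff Dg_entry f_def lam_def anz snz pnz)
  define Am where "Am = mat 1 + Dh ** \<Omega> ** Dh"
  have clt: "\<forall>i. (\<chi> j. s $ j * lam $ j * s $ j) $ i < 1"
  proof
    fix i
    have "a $ i * (s $ i)^2 * (s $ i)^2 < p $ i"
      unfolding p_def using apos[of i] om[of i] spos
      by (simp add: algebra_simps power2_eq_square add_pos_pos)
    then show "(\<chi> j. s $ j * lam $ j * s $ j) $ i < 1"
      using ppos[of i] by (simp add: lam_def divide_less_eq power2_eq_square algebra_simps)
  qed
  have SDg: "Ds ** \<Lambda> ** Ds = Dg (\<chi> j. s $ j * lam $ j * s $ j)"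
    by (simp add: L Ds_def Dg_Dg)
  have ker: "\<forall>y. (Am - Ds ** \<Lambda> ** Ds) *v y = 0 \<longrightarrow> y = 0"
    using ker_trivial[OF pd clt] unfolding Am_def SDg Dh_def by blast
  then obtain Bi where "Bi ** (Am - Ds ** \<Lambda> ** Ds) = mat 1"
    using matrix_left_invertible_ker by blast
  then have "(Am - Ds ** \<Lambda> ** Ds) ** Bi = mat 1" using matrix_left_right_inverse by blast
  then have "C = Bi" unfolding C_def Am_def[symmetric] by (rule matrix_inv_eq)
  then have SC: "(Am - Ds ** \<Lambda> ** Ds) ** C = mat 1"
    using \<open>(Am - Ds ** \<Lambda> ** Ds) ** Bi = mat 1\<close> by simp
  define M where "M = block C (- (C ** Ds ** \<Lambda>)) (- (\<Lambda> ** Ds ** C)) (\<Lambda> + \<Lambda> ** Ds ** C ** Ds ** \<Lambda>)"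
  define N where "N = block Am Ds Ds (Dg f)"
  define Dq' where "Dq' = block Dq 0 0 Dq"
  define Dh' where "Dh' = block Dh 0 0 Dh"
  have NM: "N ** M = mat 1" unfolding N_def M_def by (rule block_inverse[OF SC FL])
  have QH: "Dq' ** Dh' = mat 1" by (simp add: Dq'_def Dh'_def block_mult DqDh block_mat1)
  have e1: "Dq ** Am ** Dq = Dg a + \<Omega>"
  proof -
    have "Dq ** Dq = Dg a" using apos
      by (simp add: Dq_def Dg_Dg Dg_eq_iff vec_eq_iff Dg_entry less_imp_le)
    then show ?thesis
      by (simp add: Am_def matrix_add_ldistrib mm_simps DqDh DhDq' matrix_mul_assoc)
  qed
  have e2: "Dq ** Ds ** Dq = Dg as"
    using apos by (simp add: Dq_def Ds_def as_def Dg_Dg Dg_eq_iff vec_eq_iff Dg_entry less_imp_le mult_ac)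
  have e3: "Dq ** Dg f ** Dq = Dg e"
  proof -
    have "sqrt (a $ j) * f $ j * sqrt (a $ j) = e $ j" for j
    proof -
      have "sqrt (a $ j) * f $ j * sqrt (a $ j) = a $ j * f $ j"
        using apos[of j] by (simp add: less_imp_le mult_ac)
      also have "\<dots> = e $ j" using anz[of j] snz[of j]
        by (simp add: f_def e_def p_def field_simps power2_eq_square)
      finally show ?thesis .
    qed
    then show ?thesis by (simp add: Dq_def Dg_Dg Dg_eq_iff vec_eq_iff Dg_entry)
  qed
  have HN: "hessian (J_elbo Y x off B \<Omega>) v = - (Dq' ** N ** Dq')"
    by (simp add: H Dq'_def N_def block_mult block_neg e1 e2 e3)
  have "hessian (J_elbo Y x off B \<Omega>) v ** (- (Dh' ** M ** Dh')) = (Dq' ** N ** Dq') ** (Dh' ** M ** Dh')"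
    by (simp add: HN mm_simps)
  also have "\<dots> = Dq' ** N ** (Dq' ** Dh') ** M ** Dh'" by (simp add: matrix_mul_assoc)
  also have "\<dots> = Dq' ** (N ** M) ** Dh'" by (simp add: QH matrix_mul_assoc)
  also have "\<dots> = mat 1" by (simp add: NM QH)
  finally have "matrix_inv (hessian (J_elbo Y x off B \<Omega>) v) = - (Dh' ** M ** Dh')"
    by (rule matrix_inv_eq)
  then show ?thesis by (simp add: v_def Dh'_def M_def)
qed
theorem proposition8:
  fixes Y :: "nat^'p" and x :: "real^'m" and off :: "real^'p"
    and B :: "real^'p^'m" and \<Omega> :: "real^'p^'p" and m s :: "real^'p"
  assumes "sym_pos_def \<Omega>" and "\<forall>j. s $ j > 0"
  shows "let a = atilde x off B m s;
             Ds = Dg s;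
             Dh = Dg (\<chi> j. 1 / sqrt (a $ j));
             \<Lambda> = matrix_inv (mat 1 + Ds ** Ds ** (Dg a + Dg a ** Ds ** Ds + diagpart \<Omega>))
                   ** Dg a ** Ds ** Ds;
             C = matrix_inv (mat 1 + Dh ** \<Omega> ** Dh - Ds ** \<Lambda> ** Ds)
         in matrix_inv (hessian (J_elbo Y x off B \<Omega>) (psi m s))
            = - (block Dh 0 0 Dh ** block C (- (C ** Ds ** \<Lambda>)) (- (\<Lambda> ** Ds ** C))
                    (\<Lambda> + \<Lambda> ** Ds ** C ** Ds ** \<Lambda>) ** block Dh 0 0 Dh)"
  unfolding Let_def by (rule main[OF assms refl refl refl refl refl])

end
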